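(* Let $s,t,r>1$ be integers and let $G=C_s * C_t$ be the free product of cyclic groups of orders $s$ and $t$. For every $w\in G$, the normal closure of $w^r$ in $G$ is a proper subgroup of $G$. *)

theory Defs
  imports "HOL-Algebra.Algebra"
begin

text \<open>The free product C_s * C_t, realised concretely by reduced words.
  A letter Inl i (0 < i < s) stands for a^i, where a generates C_s = Z/sZ;
  a letter Inr j (0 < j < t) stands for b^j, where b generates C_t = Z/tZ.\<close>

definition fp_letter :: "nat \<Rightarrow> nat \<Rightarrow> nat + nat \<Rightarrow> bool" where
  "fp_letter s t x = (case x of Inl i \<Rightarrow> 0 < i \<and> i < s | Inr j \<Rightarrow> 0 < j \<and> j < t)"

definition fp_reduced :: "nat \<Rightarrow> nat \<Rightarrow> (nat + nat) list \<Rightarrow> bool" where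
  "fp_reduced s t w = ((\<forall>x \<in> set w. fp_letter s t x) \<and> successively (\<lambda>x y. isl x \<noteq> isl y) w)"

fun fp_ins :: "nat \<Rightarrow> nat \<Rightarrow> nat + nat \<Rightarrow> (nat + nat) list \<Rightarrow> (nat + nat) list" where
  "fp_ins s t x [] = [x]"
| "fp_ins s t (Inl i) (Inl j # w) =
     (if (i + j) mod s = 0 then w else Inl ((i + j) mod s) # w)"
| "fp_ins s t (Inr i) (Inr j # w) =
     (if (i + j) mod t = 0 then w else Inr ((i + j) mod t) # w)"
| "fp_ins s t x (y # w) = x # y # w"

definition fp_mult :: "nat \<Rightarrow> nat \<Rightarrow> (nat + nat) list \<Rightarrow> (nat + nat) list \<Rightarrow> (nat + nat) list" where
  "fp_mult s t u v = foldr (fp_ins s t) u v"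

definition free_prod_cyclic :: "nat \<Rightarrow> nat \<Rightarrow> (nat + nat) list monoid" where
  "free_prod_cyclic s t =
     \<lparr> carrier = {w. fp_reduced s t w}, monoid.mult = fp_mult s t, one = [] \<rparr>"

definition normal_closure :: "('a, 'b) monoid_scheme \<Rightarrow> 'a set \<Rightarrow> 'a set" where
  "normal_closure G S =
     generate G (\<Union>g \<in> carrier G. (\<lambda>x. g \<otimes>\<^bsub>G\<^esub> x \<otimes>\<^bsub>G\<^esub> inv\<^bsub>G\<^esub> g) ` S)"

end

theory Submission
  imports Defs "HOL-Analysis.Analysis" "HOL-Computational_Algebra.Fundamental_Theorem_Algebra"
begin


lemma red_Cons: "fp_reduced s t (x # w) \<longleftrightarrow> fp_letter s t x \<and> fp_reduced s t w \<and> (w = [] \<or> isl x \<noteq> isl (hd w))"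
  unfolding fp_reduced_def by (auto simp: successively_Cons)

lemma red_Nil[simp]: "fp_reduced s t []" by (simp add: fp_reduced_def)

lemma ins_red:
  assumes "fp_letter s t x" "fp_reduced s t w"
  shows "fp_reduced s t (fp_ins s t x w)"
proof (cases w)
  case Nil thus ?thesis using assms by (simp add: red_Cons)
next
  case (Cons y w')
  show ?thesis
  proof (cases x)
    case (Inl i)
    show ?thesis
    proof (cases y)
      case (Inl j)
      with assms Cons \<open>x = Inl i\<close> show ?thesis
        by (auto simp: red_Cons fp_letter_def)
    next
      case (Inr j)
      with assms Cons \<open>x = Inl i\<close> show ?thesis by (auto simp: red_Cons)
    qed
  next
    case (Inr i)
    show ?thesis
    proof (cases y)
      case (Inr j)
      with assms Cons \<open>x = Inr i\<close> show ?thesis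
        by (auto simp: red_Cons fp_letter_def)
    next
      case (Inl j)
      with assms Cons \<open>x = Inr i\<close> show ?thesis by (auto simp: red_Cons)
    qed
  qed
qed

lemma mult_red:
  assumes "fp_reduced s t u" "fp_reduced s t v"
  shows "fp_reduced s t (fp_mult s t u v)"
  using assms unfolding fp_mult_def
  by (induction u) (auto simp: red_Cons ins_red)

lemma mod_helper:
  fixes i j m s :: nat
  shows "(i + (j + m) mod s) mod s = ((i + j) mod s + m) mod s"
  by (metis mod_add_right_eq mod_add_left_eq add.assoc)

lemma mod2: "(a::nat) < 2 * s \<Longrightarrow> a mod s = (if a < s then a else a - s)"
  by (cases "a < s") (auto simp: le_mod_geq)

lemma act_Inl:
  assumes "fp_reduced s t q" "0 < i" "i < s" "0 < j" "j < s"
  shows "fp_ins s t (Inl i) (fp_ins s t (Inl j) q) =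
    (if (i + j) mod s = 0 then q else fp_ins s t (Inl ((i + j) mod s)) q)"
proof (cases q)
  case Nil thus ?thesis by simp
next
  case (Cons y q')
  show ?thesis
  proof (cases y)
    case (Inr m) thus ?thesis using Cons by simp
  next
    case (Inl m)
    have m: "0 < m" "m < s" using assms Cons Inl by (auto simp: red_Cons fp_letter_def)
    have q': "fp_ins s t (Inl k) q' = Inl k # q'" for k
    proof (cases q')
      case Nil thus ?thesis by simp
    next
      case (Cons a q'')
      then obtain b where "a = Inr b" using assms \<open>q = y # q'\<close> Inl
        by (cases a) (auto simp: red_Cons)
      thus ?thesis using Cons by simp
    qed
    show ?thesis
    proof (cases "(j + m) mod s = 0")
      case True
      have jm: "j + m = s" using True m assms mod2[of "j+m" s] by (auto split: if_splits)
      show ?thesis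
      proof (cases "i = m")
        case True
        have "(i + j) mod s = 0" using jm True by (simp add: add.commute)
        thus ?thesis using \<open>(j + m) mod s = 0\<close> Cons Inl q' True by simp
      next
        case False
        have a1: "(i + j) mod s \<noteq> 0" using False jm m assms mod2[of "i+j" s] by (auto split: if_splits)
        have a2: "((i + j) mod s + m) mod s = i" using mod_helper[of i j m s] True assms by simp
        show ?thesis using \<open>(j + m) mod s = 0\<close> Cons Inl q' a1 a2 assms by simp
      qed
    next
      case False
      have e: "(i + (j + m) mod s) mod s = ((i + j) mod s + m) mod s" by (rule mod_helper)
      have e2: "(i + j) mod s = 0 \<Longrightarrow> (i + (j + m) mod s) mod s = m" using e m by simp
      show ?thesis using False Cons Inl e e2 m by auto
    qed
  qed
qed

lemma act_Inr:
  assumes "fp_reduced s t q" "0 < i" "i < t" "0 < j" "j < t"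
  shows "fp_ins s t (Inr i) (fp_ins s t (Inr j) q) =
    (if (i + j) mod t = 0 then q else fp_ins s t (Inr ((i + j) mod t)) q)"
proof (cases q)
  case Nil thus ?thesis by simp
next
  case (Cons y q')
  show ?thesis
  proof (cases y)
    case (Inl m) thus ?thesis using Cons by simp
  next
    case (Inr m)
    have m: "0 < m" "m < t" using assms Cons Inr by (auto simp: red_Cons fp_letter_def)
    have q': "fp_ins s t (Inr k) q' = Inr k # q'" for k
    proof (cases q')
      case Nil thus ?thesis by simp
    next
      case (Cons a q'')
      then obtain b where "a = Inl b" using assms \<open>q = y # q'\<close> Inr
        by (cases a) (auto simp: red_Cons)
      thus ?thesis using Cons by simp
    qed
    show ?thesis
    proof (cases "(j + m) mod t = 0")
      case True
      have jm: "j + m = t" using True m assms mod2[of "j+m" t] by (auto split: if_splits)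
      show ?thesis
      proof (cases "i = m")
        case True
        have "(i + j) mod t = 0" using jm True by (simp add: add.commute)
        thus ?thesis using \<open>(j + m) mod t = 0\<close> Cons Inr q' True by simp
      next
        case False
        have a1: "(i + j) mod t \<noteq> 0" using False jm m assms mod2[of "i+j" t] by (auto split: if_splits)
        have a2: "((i + j) mod t + m) mod t = i" using mod_helper[of i j m t] True assms by simp
        show ?thesis using \<open>(j + m) mod t = 0\<close> Cons Inr q' a1 a2 assms by simp
      qed
    next
      case False
      have e: "(i + (j + m) mod t) mod t = ((i + j) mod t + m) mod t" by (rule mod_helper)
      have e2: "(i + j) mod t = 0 \<Longrightarrow> (i + (j + m) mod t) mod t = m" using e m by simp
      show ?thesis using False Cons Inr e e2 m by auto
    qed
  qed
qed


lemma ins_foldr: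
  assumes x: "fp_letter s t x" and z: "fp_reduced s t z" and w: "fp_reduced s t w"
  shows "foldr (fp_ins s t) (fp_ins s t x z) w = fp_ins s t x (foldr (fp_ins s t) z w)"
proof (cases z)
  case Nil thus ?thesis by simp
next
  case (Cons y z')
  have z': "fp_reduced s t z'" and y: "fp_letter s t y" using z Cons by (auto simp: red_Cons)
  have q: "fp_reduced s t (foldr (fp_ins s t) z' w)"
    using mult_red[OF z' w] by (simp add: fp_mult_def)
  show ?thesis
  proof (cases x)
    case (Inl i)
    show ?thesis
    proof (cases y)
      case (Inl j)
      show ?thesis using act_Inl[OF q, of i j] x y Cons Inl \<open>x = Inl i\<close>
        by (auto simp: fp_letter_def)
    next
      case (Inr j) thus ?thesis using Cons Inl by simp
    qed
  next
    case (Inr i)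
    show ?thesis
    proof (cases y)
      case (Inr j)
      show ?thesis using act_Inr[OF q, of i j] x y Cons Inr \<open>x = Inr i\<close>
        by (auto simp: fp_letter_def)
    next
      case (Inl j) thus ?thesis using Cons Inr by simp
    qed
  qed
qed

lemma mult_assoc:
  assumes "fp_reduced s t u" "fp_reduced s t v" "fp_reduced s t w"
  shows "fp_mult s t (fp_mult s t u v) w = fp_mult s t u (fp_mult s t v w)"
  using assms
proof (induction u)
  case Nil thus ?case by (simp add: fp_mult_def)
next
  case (Cons x u)
  have u: "fp_reduced s t u" and x: "fp_letter s t x" using Cons.prems by (auto simp: red_Cons)
  have uv: "fp_reduced s t (foldr (fp_ins s t) u v)" using mult_red[OF u Cons.prems(2)] by (simp add: fp_mult_def)
  show ?case using Cons.IH[OF u Cons.prems(2,3)] ins_foldr[OF x uv Cons.prems(3)]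
    by (simp add: fp_mult_def)
qed

definition finv :: "nat \<Rightarrow> nat \<Rightarrow> nat + nat \<Rightarrow> nat + nat" where
  "finv s t x = (case x of Inl i \<Rightarrow> Inl (s - i) | Inr j \<Rightarrow> Inr (t - j))"

lemma finv_cancel: "fp_letter s t x \<Longrightarrow> fp_ins s t (finv s t x) (x # u) = u"
  by (cases x) (auto simp: finv_def fp_letter_def)

lemma inv_word:
  assumes "fp_reduced s t u"
  shows "fp_mult s t (rev (map (finv s t) u)) u = []"
  using assms
proof (induction u)
  case Nil thus ?case by (simp add: fp_mult_def)
next
  case (Cons x u)
  thus ?case using finv_cancel[of s t x u] by (auto simp: fp_mult_def red_Cons)
qed

lemma inv_word_red:
  assumes "fp_reduced s t u"
  shows "fp_reduced s t (rev (map (finv s t) u))"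
proof -
  have "isl (finv s t x) = isl x" for x by (cases x) (auto simp: finv_def)
  moreover have "fp_letter s t x \<Longrightarrow> fp_letter s t (finv s t x)" for x
    by (cases x) (auto simp: finv_def fp_letter_def)
  ultimately show ?thesis using assms unfolding fp_reduced_def
    by (auto simp: successively_map elim!: successively_mono)
qed

lemma fp_group: "group (free_prod_cyclic s t)"
proof (rule groupI)
  fix x y assume "x \<in> carrier (free_prod_cyclic s t)" "y \<in> carrier (free_prod_cyclic s t)"
  thus "x \<otimes>\<^bsub>free_prod_cyclic s t\<^esub> y \<in> carrier (free_prod_cyclic s t)"
    by (simp add: free_prod_cyclic_def mult_red)
next
  show "\<one>\<^bsub>free_prod_cyclic s t\<^esub> \<in> carrier (free_prod_cyclic s t)"
    by (simp add: free_prod_cyclic_def)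
next
  fix x y z assume "x \<in> carrier (free_prod_cyclic s t)" "y \<in> carrier (free_prod_cyclic s t)"
    "z \<in> carrier (free_prod_cyclic s t)"
  thus "x \<otimes>\<^bsub>free_prod_cyclic s t\<^esub> y \<otimes>\<^bsub>free_prod_cyclic s t\<^esub> z =
        x \<otimes>\<^bsub>free_prod_cyclic s t\<^esub> (y \<otimes>\<^bsub>free_prod_cyclic s t\<^esub> z)"
    by (simp add: free_prod_cyclic_def mult_assoc)
next
  fix x assume "x \<in> carrier (free_prod_cyclic s t)"
  thus "\<one>\<^bsub>free_prod_cyclic s t\<^esub> \<otimes>\<^bsub>free_prod_cyclic s t\<^esub> x = x"
    by (simp add: free_prod_cyclic_def fp_mult_def)
next
  fix x assume "x \<in> carrier (free_prod_cyclic s t)"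
  thus "\<exists>y\<in>carrier (free_prod_cyclic s t). y \<otimes>\<^bsub>free_prod_cyclic s t\<^esub> x = \<one>\<^bsub>free_prod_cyclic s t\<^esub>"
    by (intro bexI[of _ "rev (map (finv s t) x)"]) (auto simp: free_prod_cyclic_def inv_word inv_word_red)
qed



type_synonym 'a m2 = "'a \<times> 'a \<times> 'a \<times> 'a"

fun mm :: "'a::comm_ring_1 m2 \<Rightarrow> 'a m2 \<Rightarrow> 'a m2" where
  "mm (a,b,c,d) (e,f,g,h) = (a*e+b*g, a*f+b*h, c*e+d*g, c*f+d*h)"

definition mI :: "'a::comm_ring_1 m2" where "mI = (1,0,0,1)"

fun mneg :: "'a::comm_ring_1 m2 \<Rightarrow> 'a m2" where
  "mneg (a,b,c,d) = (-a,-b,-c,-d)"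

fun mtr :: "'a::comm_ring_1 m2 \<Rightarrow> 'a" where "mtr (a,b,c,d) = a + d"
fun mdet :: "'a::comm_ring_1 m2 \<Rightarrow> 'a" where "mdet (a,b,c,d) = a * d - b * c"

definition sim :: "'a::comm_ring_1 m2 \<Rightarrow> 'a m2 \<Rightarrow> bool" where
  "sim A B = (A = B \<or> A = mneg B)"

fun mpow :: "'a::comm_ring_1 m2 \<Rightarrow> nat \<Rightarrow> 'a m2" where
  "mpow M 0 = mI"
| "mpow M (Suc n) = mm (mpow M n) M"

lemma mm_assoc: "mm (mm A B) C = mm A (mm B C)"
  by (cases A rule: prod_cases4, cases B rule: prod_cases4, cases C rule: prod_cases4)
     (simp add: algebra_simps)

lemma mm_I[simp]: "mm mI A = A" "mm A mI = A"
  by (cases A rule: prod_cases4, simp add: mI_def)+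

lemma mneg_mneg[simp]: "mneg (mneg A) = A"
  by (cases A rule: prod_cases4) simp

lemma mm_neg[simp]: "mm (mneg A) B = mneg (mm A B)" "mm A (mneg B) = mneg (mm A B)"
  by (cases A rule: prod_cases4, cases B rule: prod_cases4, simp add: algebra_simps)+

lemma mtr_comm: "mtr (mm A B) = mtr (mm B A)"
  by (cases A rule: prod_cases4, cases B rule: prod_cases4) (simp add: algebra_simps)

lemma mdet_mm[simp]: "mdet (mm A B) = mdet A * mdet B"
  by (cases A rule: prod_cases4, cases B rule: prod_cases4) (simp add: algebra_simps)

lemma mdet_neg[simp]: "mdet (mneg A) = mdet A" and mtr_neg[simp]: "mtr (mneg A) = - mtr A"
  by (cases A rule: prod_cases4, simp)+

lemma mdet_I[simp]: "mdet mI = 1" by (simp add: mI_def)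

lemma mneg_inj[simp]: "mneg A = mneg B \<longleftrightarrow> A = B"
  by (metis mneg_mneg)

lemma sim_refl[simp]: "sim A A" by (simp add: sim_def)
lemma sim_sym: "sim A B \<Longrightarrow> sim B A" by (auto simp: sim_def)
lemma sim_trans: "sim A B \<Longrightarrow> sim B C \<Longrightarrow> sim A C" by (auto simp: sim_def)
lemma sim_neg[simp]: "sim (mneg A) B = sim A B" "sim A (mneg B) = sim A B"
  by (auto simp: sim_def)
lemma sim_mmL: "sim A A' \<Longrightarrow> sim (mm A B) (mm A' B)" by (auto simp: sim_def)
lemma sim_mmR: "sim B B' \<Longrightarrow> sim (mm A B) (mm A B')" by (auto simp: sim_def)
lemma sim_mm: "sim A A' \<Longrightarrow> sim B B' \<Longrightarrow> sim (mm A B) (mm A' B')"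
  by (auto simp: sim_def)

lemma mpow_sim: "sim A B \<Longrightarrow> sim (mpow A n) (mpow B n)"
  by (induction n) (auto intro: sim_mm)

definition cc :: "complex \<Rightarrow> nat \<Rightarrow> complex" where
  "cc u i = (u ^ i - inverse u ^ i) / (u - inverse u)"

definition LA :: "complex \<Rightarrow> nat \<Rightarrow> complex m2" where
  "LA u i = (u ^ i, cc u i, 0, inverse u ^ i)"

definition LB :: "complex \<Rightarrow> complex \<Rightarrow> nat \<Rightarrow> complex m2" where
  "LB v lam j = (v ^ j, 0, lam * cc v j, inverse v ^ j)"

definition Lt :: "complex \<Rightarrow> complex \<Rightarrow> complex \<Rightarrow> nat + nat \<Rightarrow> complex m2" where
  "Lt u v lam x = (case x of Inl i \<Rightarrow> LA u i | Inr j \<Rightarrow> LB v lam j)"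

definition Phi :: "complex \<Rightarrow> complex \<Rightarrow> complex \<Rightarrow> (nat + nat) list \<Rightarrow> complex m2" where
  "Phi u v lam w = foldr (\<lambda>x M. mm (Lt u v lam x) M) w mI"

lemma Phi_simps[simp]: "Phi u v lam [] = mI" "Phi u v lam (x # w) = mm (Lt u v lam x) (Phi u v lam w)"
  by (simp_all add: Phi_def)

lemma Phi_append: "Phi u v lam (xs @ ys) = mm (Phi u v lam xs) (Phi u v lam ys)"
  by (induction xs) (simp_all add: mm_assoc)

lemma cc_add: "cc u (a + b) = u ^ a * cc u b + cc u a * inverse u ^ b"
proof -
  have "cc u (a+b) = (u^a * u^b - inverse u^a * inverse u^b) / (u - inverse u)"
    by (simp add: cc_def power_add)
  also have "\<dots> = (u^a * (u^b - inverse u^b) + (u^a - inverse u^a) * inverse u^b) / (u - inverse u)"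
    by (simp add: algebra_simps)
  also have "\<dots> = u ^ a * cc u b + cc u a * inverse u ^ b"
    by (simp add: cc_def add_divide_distrib)
  finally show ?thesis .
qed

lemma cc_add': "cc u (a + b) = cc u a * u ^ b + inverse u ^ a * cc u b"
  using cc_add[of u b a] by (simp add: add.commute mult.commute)

lemma LA_add: "u \<noteq> 0 \<Longrightarrow> LA u (a + b) = mm (LA u a) (LA u b)"
  by (simp add: LA_def cc_add power_add algebra_simps)

lemma LB_add: "v \<noteq> 0 \<Longrightarrow> LB v lam (a + b) = mm (LB v lam a) (LB v lam b)"
  by (simp add: LB_def cc_add' power_add algebra_simps)

lemma LA_0[simp]: "LA u 0 = mI" and LB_0[simp]: "LB v lam 0 = mI"
  by (simp_all add: LA_def LB_def cc_def mI_def)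

lemma LA_s: assumes "u \<noteq> 0" "u ^ s = 1 \<or> u ^ s = -1" shows "sim (LA u s) mI"
proof -
  have "inverse u ^ s = u ^ s" using assms by (auto simp: power_inverse)
  thus ?thesis using assms by (auto simp: LA_def cc_def sim_def mI_def)
qed

lemma LB_t: assumes "v \<noteq> 0" "v ^ t = 1 \<or> v ^ t = -1" shows "sim (LB v lam t) mI"
proof -
  have "inverse v ^ t = v ^ t" using assms by (auto simp: power_inverse)
  thus ?thesis using assms by (auto simp: LB_def cc_def sim_def mI_def)
qed



declare sim_trans[trans]

definition Rep :: "nat \<Rightarrow> nat \<Rightarrow> complex \<Rightarrow> complex \<Rightarrow> bool" where
  "Rep s t u v = (u \<noteq> 0 \<and> v \<noteq> 0 \<and> (u ^ s = 1 \<or> u ^ s = -1) \<and> (v ^ t = 1 \<or> v ^ t = -1))"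

lemma LA_mult_s: assumes "Rep s t u v" shows "sim (LA u (s * q)) mI"
proof (induction q)
  case 0 thus ?case by simp
next
  case (Suc q)
  have "LA u (s * Suc q) = mm (LA u s) (LA u (s * q))"
    using assms by (simp add: Rep_def LA_add[symmetric])
  moreover have "sim (LA u s) mI" using assms unfolding Rep_def by (intro LA_s) auto
  ultimately show ?case using sim_mm[OF _ Suc.IH, of "LA u s" mI] by simp
qed

lemma LB_mult_t: assumes "Rep s t u v" shows "sim (LB v lam (t * q)) mI"
proof (induction q)
  case 0 thus ?case by simp
next
  case (Suc q)
  have "LB v lam (t * Suc q) = mm (LB v lam t) (LB v lam (t * q))"
    using assms by (simp add: Rep_def LB_add[symmetric])
  moreover have "sim (LB v lam t) mI" using assms unfolding Rep_def by (intro LB_t) auto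
  ultimately show ?case using sim_mm[OF _ Suc.IH, of "LB v lam t" mI] by simp
qed

lemma LA_mod: assumes "Rep s t u v" shows "sim (LA u n) (LA u (n mod s))"
proof -
  have "LA u n = mm (LA u (s * (n div s))) (LA u (n mod s))"
    using assms by (simp add: Rep_def LA_add[symmetric])
  thus ?thesis using sim_mmL[OF LA_mult_s[OF assms]] by simp
qed

lemma LB_mod: assumes "Rep s t u v" shows "sim (LB v lam n) (LB v lam (n mod t))"
proof -
  have "LB v lam n = mm (LB v lam (t * (n div t))) (LB v lam (n mod t))"
    using assms by (simp add: Rep_def LB_add[symmetric])
  thus ?thesis using sim_mmL[OF LB_mult_t[OF assms]] by simp
qed

lemma Phi_ins: assumes "Rep s t u v"
  shows "sim (Phi u v lam (fp_ins s t x w)) (mm (Lt u v lam x) (Phi u v lam w))"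
proof (cases w)
  case Nil thus ?thesis by simp
next
  case (Cons y w')
  have A: "sim (mm (LA u i) (mm (LA u j) M)) (mm (LA u ((i + j) mod s)) M)" for i j M
    using sim_mmL[OF LA_mod[OF assms, where n="i+j"], where B=M] assms
    by (simp add: mm_assoc[symmetric] LA_add[symmetric] Rep_def)
  have B: "sim (mm (LB v lam i) (mm (LB v lam j) M)) (mm (LB v lam ((i + j) mod t)) M)" for i j M
    using sim_mmL[OF LB_mod[OF assms, where n="i+j" and lam=lam], where B=M] assms
    by (simp add: mm_assoc[symmetric] LB_add[symmetric] Rep_def)
  show ?thesis
  proof (cases x; cases y)
    fix i j assume "x = Inl i" "y = Inl j"
    thus ?thesis using Cons A[of i j "Phi u v lam w'"] by (auto simp: Lt_def sim_sym)
  next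
    fix i j assume "x = Inr i" "y = Inr j"
    thus ?thesis using Cons B[of i j "Phi u v lam w'"] by (auto simp: Lt_def sim_sym)
  qed (use Cons in auto)
qed

lemma Phi_mult: assumes "Rep s t u v"
  shows "sim (Phi u v lam (fp_mult s t a b)) (mm (Phi u v lam a) (Phi u v lam b))"
proof (induction a)
  case Nil thus ?case by (simp add: fp_mult_def)
next
  case (Cons x a)
  have "sim (Phi u v lam (fp_mult s t (x # a) b)) (mm (Lt u v lam x) (Phi u v lam (fp_mult s t a b)))"
    using Phi_ins[OF assms] by (simp add: fp_mult_def)
  also have "sim \<dots> (mm (Lt u v lam x) (mm (Phi u v lam a) (Phi u v lam b)))"
    by (rule sim_mmR[OF Cons.IH])
  finally show ?case by (simp add: mm_assoc)
qed



definition zeta :: "nat \<Rightarrow> complex" where "zeta n = exp (\<i> * of_real (pi / real n))"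

lemma zeta_nz[simp]: "zeta n \<noteq> 0" by (simp add: zeta_def)

lemma zeta_pow: "zeta n ^ k = exp (\<i> * of_real (real k * pi / real n))"
proof -
  have "zeta n ^ k = exp (of_nat k * (\<i> * of_real (pi / real n)))"
    by (simp only: zeta_def exp_of_nat_mult)
  also have "of_nat k * (\<i> * of_real (pi / real n)) = \<i> * of_real (real k * pi / real n)"
    by (simp add: field_simps)
  finally show ?thesis .
qed

lemma zeta_n: "n > 0 \<Longrightarrow> zeta n ^ n = -1"
  by (simp add: zeta_pow)

lemma zeta_2i: assumes "0 < i" "i < n" shows "zeta n ^ (2 * i) \<noteq> 1"
proof
  assume "zeta n ^ (2 * i) = 1"
  hence "exp (\<i> * of_real (real (2 * i) * pi / real n)) = 1" by (simp add: zeta_pow)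
  then obtain m :: int where m: "real (2 * i) * pi / real n = of_int (2 * m) * pi"
    by (auto simp: exp_eq_1)
  hence "real i = of_int m * real n" using assms by (simp add: field_simps)
  hence "int i = m * int n" by (metis of_int_eq_iff of_int_mult of_int_of_nat_eq)
  thus False using assms
    by (metis mult_eq_0_iff less_not_refl2 nat_less_le nat_mult_dvd_cancel_disj dvd_triv_right
        zdvd_imp_le int_dvd_int_iff dvd_triv_left gr_implies_not_zero of_nat_0_less_iff not_le
        dvd_imp_le)
qed

lemma cc_nz:
  assumes "u \<noteq> 0" "u ^ 2 \<noteq> 1" "u ^ (2 * i) \<noteq> 1"
  shows "cc u i \<noteq> 0"
proof -
  have "u ^ i \<noteq> inverse u ^ i"
  proof
    assume "u ^ i = inverse u ^ i"
    hence "u ^ i * u ^ i = u ^ i * inverse (u ^ i)" by (simp add: power_inverse)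
    also have "\<dots> = 1" using assms(1) by simp
    finally have "u ^ i * u ^ i = 1" .
    thus False using assms(3) by (simp add: power_mult power2_eq_square[symmetric] mult.commute power_mult_distrib)
  qed
  moreover have "u \<noteq> inverse u"
  proof
    assume "u = inverse u"
    hence "u * u = u * inverse u" by simp
    also have "\<dots> = 1" using assms(1) by simp
    finally have "u * u = 1" .
    thus False using assms(2) by (simp add: power2_eq_square)
  qed
  ultimately show ?thesis by (simp add: cc_def)
qed

lemma cc_rec:
  assumes "z \<noteq> 0"
  shows "cc z (Suc (Suc n)) = (z + inverse z) * cc z (Suc n) - cc z n"
proof -
  have zi: "z * inverse z = 1" using assms by simp
  have "z ^ Suc (Suc n) - inverse z ^ Suc (Suc n)
       = (z + inverse z) * (z ^ Suc n - inverse z ^ Suc n) - (z ^ n - inverse z ^ n)"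
  proof -
    have "(z + inverse z) * (z ^ Suc n - inverse z ^ Suc n) - (z ^ n - inverse z ^ n)
       = z * z * z ^ n - inverse z * inverse z * inverse z ^ n
         + (z * inverse z) * (z ^ n - inverse z ^ n) - (z ^ n - inverse z ^ n)"
      by (simp add: algebra_simps)
    also have "\<dots> = z ^ Suc (Suc n) - inverse z ^ Suc (Suc n)" using zi by simp
    finally show ?thesis by simp
  qed
  thus ?thesis unfolding cc_def by (simp add: diff_divide_distrib[symmetric] times_divide_eq_right)
qed

fun msc :: "complex \<Rightarrow> complex m2 \<Rightarrow> complex m2" where
  "msc k (a,b,c,d) = (k * a, k * b, k * c, k * d)"
fun madd :: "complex m2 \<Rightarrow> complex m2 \<Rightarrow> complex m2" where
  "madd (a,b,c,d) (e,f,g,h) = (a+e, b+f, c+g, d+h)"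

lemma CH_pow:
  assumes z: "z \<noteq> 0" "z \<noteq> inverse z" and M: "mdet M = 1" "mtr M = z + inverse z"
  shows "mpow M (Suc n) = madd (msc (cc z (Suc n)) M) (msc (- cc z n) mI)"
proof (induction n)
  case 0
  have "cc z 1 = 1" using z by (simp add: cc_def)
  thus ?case by (cases M rule: prod_cases4) (simp add: mI_def cc_def)
next
  case (Suc n)
  obtain a b c d where Md: "M = (a,b,c,d)" by (cases M rule: prod_cases4)
  have det: "a * d - b * c = 1" and tr: "a + d = z + inverse z" using M Md by auto
  have rec: "cc z (Suc (Suc n)) = (a + d) * cc z (Suc n) - cc z n" using cc_rec[OF z(1)] tr by simp
  have "mpow M (Suc (Suc n)) = mm (madd (msc (cc z (Suc n)) M) (msc (- cc z n) mI)) M"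
    using Suc by simp
  also have "\<dots> = madd (msc (cc z (Suc (Suc n))) M) (msc (- cc z (Suc n)) mI)"
  proof -
    have ad: "a * d = 1 + b * c" using det by (metis diff_add_cancel)
    have e: "a * (d * q) = q + b * (c * q)" for q
    proof -
      have "a * (d * q) = (a * d) * q" by (simp add: mult.assoc)
      also have "\<dots> = q + b * (c * q)" unfolding ad by (simp add: distrib_right mult.assoc)
      finally show ?thesis .
    qed
    show ?thesis unfolding Md rec
      by (simp add: mI_def algebra_simps e)
  qed
  finally show ?case .
qed

lemma CH_root:
  fixes z :: complex
  assumes r: "r > 1" and z: "z \<noteq> 0" "z ^ 2 \<noteq> 1" "z ^ r = -1"
    and M: "mdet M = 1" "mtr M = z + inverse z"
  shows "sim (mpow M r) mI"
proof -
  have zi: "z \<noteq> inverse z"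
  proof
    assume "z = inverse z"
    hence "z * z = z * inverse z" by simp
    also have "\<dots> = 1" using z(1) by simp
    finally have "z * z = 1" .
    thus False using z(2) by (simp add: power2_eq_square)
  qed
  obtain n where rn: "r = Suc n" using r by (cases r) auto
  have izr: "inverse z ^ r = -1" using z(3) by (simp add: power_inverse)
  have c1: "cc z r = 0" using z(3) izr by (simp add: cc_def)
  have "z ^ n = - inverse z"
  proof -
    have "z * z ^ n = -1" using z(3) rn by simp
    thus ?thesis using z(1) by (simp add: field_simps)
  qed
  moreover have "inverse z ^ n = - z"
  proof -
    have "inverse z * inverse z ^ n = -1" using izr rn by simp
    thus ?thesis using z(1) by (simp add: field_simps)
  qed
  ultimately have c2: "cc z n = 1" using zi by (simp add: cc_def)
  have "mpow M r = madd (msc 0 M) (msc (-1) mI)"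
    using CH_pow[OF z(1) zi M, of n] rn c1 c2 by simp
  also have "\<dots> = mneg mI" by (cases M rule: prod_cases4) (simp add: mI_def)
  finally show ?thesis by (simp add: sim_def)
qed



definition LAp :: "complex \<Rightarrow> nat \<Rightarrow> complex Polynomial.poly m2" where
  "LAp u i = ([:u ^ i:], [:cc u i:], 0, [:inverse u ^ i:])"
definition LBp :: "complex \<Rightarrow> nat \<Rightarrow> complex Polynomial.poly m2" where
  "LBp v j = ([:v ^ j:], 0, [:0, cc v j:], [:inverse v ^ j:])"
definition Ltp :: "complex \<Rightarrow> complex \<Rightarrow> nat + nat \<Rightarrow> complex Polynomial.poly m2" where
  "Ltp u v x = (case x of Inl i \<Rightarrow> LAp u i | Inr j \<Rightarrow> LBp v j)"
definition Phip :: "complex \<Rightarrow> complex \<Rightarrow> (nat + nat) list \<Rightarrow> complex Polynomial.poly m2" where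
  "Phip u v w = foldr (\<lambda>x M. mm (Ltp u v x) M) w mI"

fun meval :: "complex \<Rightarrow> complex Polynomial.poly m2 \<Rightarrow> complex m2" where
  "meval lam (a,b,c,d) = (Polynomial.poly a lam, Polynomial.poly b lam, Polynomial.poly c lam, Polynomial.poly d lam)"

lemma meval_mm: "meval lam (mm A B) = mm (meval lam A) (meval lam B)"
  by (cases A rule: prod_cases4, cases B rule: prod_cases4) simp

lemma meval_I: "meval lam mI = mI" by (simp add: mI_def)

lemma meval_Lt: "meval lam (Ltp u v x) = Lt u v lam x"
  by (cases x) (simp_all add: Ltp_def Lt_def LAp_def LBp_def LA_def LB_def mult.commute)

lemma meval_Phi: "meval lam (Phip u v w) = Phi u v lam w"
  by (induction w) (simp_all add: Phip_def meval_I meval_mm meval_Lt)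

definition props :: "complex Polynomial.poly m2 \<Rightarrow> nat \<Rightarrow> bool" where
  "props M n = (case M of (a,b,c,d) \<Rightarrow> Polynomial.degree a \<le> n \<and> Polynomial.coeff a n \<noteq> 0 \<and> Polynomial.degree b \<le> n - 1
      \<and> (n = 0 \<longrightarrow> b = 0) \<and> Polynomial.degree c \<le> n \<and> Polynomial.degree d \<le> n - 1)"

lemma deg_mult_le': "Polynomial.degree p \<le> k \<Longrightarrow> Polynomial.degree q \<le> m \<Longrightarrow> Polynomial.degree (p * q) \<le> k + m"
  by (meson add_le_mono degree_mult_le order_trans)

lemma props_step:
  assumes P: "props M n" and q: "q \<noteq> 0"
  shows "props (mm ([:p, q:], [:e:], [:f, g:], [:h:]) M) (Suc n)"
proof -
  obtain a b c d where Md: "M = (a,b,c,d)" by (cases M rule: prod_cases4)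
  have a: "Polynomial.degree a \<le> n" "Polynomial.coeff a n \<noteq> 0" and b: "Polynomial.degree b \<le> n - 1" "n = 0 \<Longrightarrow> b = 0"
    and c: "Polynomial.degree c \<le> n" and d: "Polynomial.degree d \<le> n - 1" using P Md by (auto simp: props_def)
  have d1: "Polynomial.degree [:p, q:] \<le> 1" by simp
  have d0: "Polynomial.degree [:e:] \<le> 0" for e :: complex by simp
  have d1': "Polynomial.degree [:f, g:] \<le> 1" by simp
  have bb: "Polynomial.degree ([:p, q:] * b) \<le> n" "Polynomial.degree ([:f, g:] * b) \<le> n"
  proof -
    have "Polynomial.degree ([:p, q:] * b) \<le> n \<and> Polynomial.degree ([:f, g:] * b) \<le> n"
    proof (cases "n = 0")
      case True thus ?thesis using b by simp
    next
      case False
      have "Polynomial.degree ([:p, q:] * b) \<le> 1 + (n - 1)" "Polynomial.degree ([:f, g:] * b) \<le> 1 + (n - 1)"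
        by (rule deg_mult_le'[OF _ b(1)], simp)+
      thus ?thesis using False by simp
    qed
    thus "Polynomial.degree ([:p, q:] * b) \<le> n" "Polynomial.degree ([:f, g:] * b) \<le> n" by auto
  qed
  have A1: "Polynomial.degree ([:p, q:] * a + [:e:] * c) \<le> Suc n"
  proof -
    have "Polynomial.degree ([:p, q:] * a) \<le> 1 + n" by (rule deg_mult_le'[OF d1 a(1)])
    moreover have "Polynomial.degree ([:e:] * c) \<le> 0 + n" by (rule deg_mult_le'[OF d0 c])
    ultimately show ?thesis by (intro degree_add_le) auto
  qed
  have A2: "Polynomial.coeff ([:p, q:] * a + [:e:] * c) (Suc n) = q * Polynomial.coeff a n"
  proof -
    have "Polynomial.coeff a (Suc n) = 0" using a(1) by (intro coeff_eq_0) auto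
    moreover have "Polynomial.coeff c (Suc n) = 0" using c by (intro coeff_eq_0) auto
    ultimately show ?thesis by (simp add: mult_pCons_left coeff_pCons)
  qed
  have B1: "Polynomial.degree ([:p, q:] * b + [:e:] * d) \<le> Suc n - 1"
  proof -
    have "Polynomial.degree ([:e:] * d) \<le> 0 + (n - 1)" by (rule deg_mult_le'[OF d0 d])
    thus ?thesis using bb by (intro degree_add_le) auto
  qed
  have C1: "Polynomial.degree ([:f, g:] * a + [:h:] * c) \<le> Suc n"
  proof -
    have "Polynomial.degree ([:f, g:] * a) \<le> 1 + n" by (rule deg_mult_le'[OF d1' a(1)])
    moreover have "Polynomial.degree ([:h:] * c) \<le> 0 + n" by (rule deg_mult_le'[OF d0 c])
    ultimately show ?thesis by (intro degree_add_le) auto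
  qed
  have D1: "Polynomial.degree ([:f, g:] * b + [:h:] * d) \<le> Suc n - 1"
  proof -
    have "Polynomial.degree ([:h:] * d) \<le> 0 + (n - 1)" by (rule deg_mult_le'[OF d0 d])
    thus ?thesis using bb by (intro degree_add_le) auto
  qed
  have A3: "Polynomial.coeff ([:p, q:] * a + [:e:] * c) (Suc n) \<noteq> 0" using A2 q a(2) by (simp only: mult_eq_0_iff) simp
  show ?thesis using A1 A3 B1 C1 D1 unfolding Md props_def by simp
qed

lemma pair_mm: "mm (LAp u i) (LBp v j) =
   ([:u ^ i * v ^ j, cc u i * cc v j:], [:cc u i * inverse v ^ j:], [:0, inverse u ^ i * cc v j:],
    [:inverse u ^ i * inverse v ^ j:])"
  by (simp add: LAp_def LBp_def mult_pCons_left)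

lemma Phip_simps[simp]: "Phip u v [] = mI" "Phip u v (x # w) = mm (Ltp u v x) (Phip u v w)"
  by (simp_all add: Phip_def)

lemma deg_main:
  assumes nzu: "\<And>i. 0 < i \<Longrightarrow> i < s \<Longrightarrow> cc u i \<noteq> 0"
    and nzv: "\<And>j. 0 < j \<Longrightarrow> j < t \<Longrightarrow> cc v j \<noteq> 0"
  shows "fp_reduced s t w \<Longrightarrow> w = [] \<or> (isl (hd w) \<and> \<not> isl (last w)) \<Longrightarrow>
    \<exists>n. length w = 2 * n \<and> props (Phip u v w) n"
proof (induction w rule: induct_list012)
  case 1
  show ?case by (intro exI[of _ 0]) (simp add: props_def mI_def)
next
  case (2 x)
  thus ?case by simp
next
  case (3 x y zs)
  obtain i where x: "x = Inl i" using 3(4) by (cases x) auto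
  have ry: "fp_reduced s t (y # zs)" and i: "0 < i" "i < s" and xy: "isl x \<noteq> isl y"
    using 3(3) x by (auto simp: red_Cons fp_letter_def)
  obtain j where y: "y = Inr j" using xy x by (cases y) auto
  have rz: "fp_reduced s t zs" and j: "0 < j" "j < t" and yz: "zs = [] \<or> isl y \<noteq> isl (hd zs)"
    using ry y by (auto simp: red_Cons fp_letter_def)
  have "zs = [] \<or> (isl (hd zs) \<and> \<not> isl (last zs))" using yz y 3(4) by auto
  then obtain n where n: "length zs = 2 * n" "props (Phip u v zs) n" using 3(1)[OF rz] by blast
  have "Phip u v (x # y # zs) = mm (mm (LAp u i) (LBp v j)) (Phip u v zs)"
    by (simp add: x y Ltp_def mm_assoc)
  hence "props (Phip u v (x # y # zs)) (Suc n)"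
    using props_step[OF n(2), of "cc u i * cc v j"] nzu[OF i] nzv[OF j] by (simp add: pair_mm)
  thus ?case using n(1) by (intro exI[of _ "Suc n"]) simp
qed

lemma exists_lam:
  assumes nzu: "\<And>i. 0 < i \<Longrightarrow> i < s \<Longrightarrow> cc u i \<noteq> 0"
    and nzv: "\<And>j. 0 < j \<Longrightarrow> j < t \<Longrightarrow> cc v j \<noteq> 0"
    and w: "fp_reduced s t w" "w \<noteq> []" "isl (hd w)" "\<not> isl (last w)"
  shows "\<exists>lam. mtr (Phi u v lam w) = tau"
proof -
  obtain n where n: "length w = 2 * n" "props (Phip u v w) n" using deg_main[OF nzu nzv w(1)] w by blast
  have n1: "n \<ge> 1" using n(1) w(2) by (cases n) auto
  obtain a b c d where P: "Phip u v w = (a,b,c,d)" by (cases "Phip u v w" rule: prod_cases4)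
  have a: "Polynomial.coeff a n \<noteq> 0" and d: "Polynomial.degree d \<le> n - 1" using n(2) P by (auto simp: props_def)
  define T where "T = a + d - [:tau:]"
  have "Polynomial.coeff d n = 0" using d n1 by (intro coeff_eq_0) auto
  moreover have "Polynomial.coeff [:tau:] n = 0" using n1 by (cases n) auto
  ultimately have "Polynomial.coeff T n \<noteq> 0" using a by (simp add: T_def)
  hence "n \<le> Polynomial.degree T" by (rule le_degree)
  hence "\<not> constant (Polynomial.poly T)" using n1 by (simp add: constant_degree)
  then obtain lam where "Polynomial.poly T lam = 0" using fundamental_theorem_of_algebra by blast
  hence "Polynomial.poly a lam + Polynomial.poly d lam = tau" by (simp add: T_def)
  moreover have "Phi u v lam w = meval lam (Phip u v w)" by (simp add: meval_Phi)
  ultimately have "mtr (Phi u v lam w) = tau" using P by simp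
  thus ?thesis by blast
qed



lemma mpow_I[simp]: "mpow mI n = mI" by (induction n) simp_all

lemma mdet_Phi: "u \<noteq> 0 \<Longrightarrow> v \<noteq> 0 \<Longrightarrow> mdet (Phi u v lam w) = 1"
proof (induction w)
  case Nil thus ?case by simp
next
  case (Cons x w)
  have "mdet (Lt u v lam x) = 1" using Cons.prems
    by (cases x) (simp_all add: Lt_def LA_def LB_def power_mult_distrib[symmetric])
  thus ?case using Cons by simp
qed

lemma mpow_conj:
  assumes h1: "sim (mm K K') mI" and h2: "sim (mm K' K) mI"
  shows "sim (mpow (mm (mm K M) K') n) (mm (mm K (mpow M n)) K')"
proof (induction n)
  case 0 thus ?case using h1 by (simp add: sim_sym)
next
  case (Suc n)
  let ?Mn = "mpow M n"
  have "sim (mpow (mm (mm K M) K') (Suc n)) (mm (mm (mm K ?Mn) K') (mm (mm K M) K'))"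
    using sim_mmL[OF Suc.IH] by simp
  also have "mm (mm (mm K ?Mn) K') (mm (mm K M) K') = mm (mm K ?Mn) (mm (mm K' K) (mm M K'))"
    by (simp add: mm_assoc)
  also have "sim \<dots> (mm (mm K ?Mn) (mm mI (mm M K')))"
    by (rule sim_mmR[OF sim_mmL[OF h2]])
  also have "mm (mm K ?Mn) (mm mI (mm M K')) = mm (mm K (mpow M (Suc n))) K'"
    by (simp add: mm_assoc)
  finally show ?case .
qed

lemma conj_final:
  assumes h1: "sim (mm K K') mI" and h2: "sim (mm K' K) mI" and M: "sim (mpow M r) mI"
    and W: "sim W (mm (mm K M) K')"
  shows "sim (mpow W r) mI"
proof -
  have "sim (mpow W r) (mpow (mm (mm K M) K') r)" by (rule mpow_sim[OF W])
  also have "sim \<dots> (mm (mm K (mpow M r)) K')" by (rule mpow_conj[OF h1 h2])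
  also have "sim \<dots> (mm (mm K mI) K')" by (rule sim_mmL[OF sim_mmR[OF M]])
  also have "sim \<dots> mI" using h1 by simp
  finally show ?thesis .
qed

lemma zeta_sq: "1 < n \<Longrightarrow> zeta n ^ 2 \<noteq> 1"
  using zeta_2i[of 1 n] by simp

lemma cc_zeta: "0 < i \<Longrightarrow> i < n \<Longrightarrow> cc (zeta n) i \<noteq> 0"
  by (intro cc_nz zeta_nz zeta_sq zeta_2i) auto

lemma Phi_single[simp]: "Phi u v lam [x] = Lt u v lam x" by simp

lemma even_case:
  assumes st: "s > 1" "t > 1" "r > 1" and w: "fp_reduced s t w" "w \<noteq> []" "isl (hd w) \<noteq> isl (last w)"
  shows "\<exists>u v lam. Rep s t u v \<and> (u ^ 2 \<noteq> 1 \<or> v ^ 2 \<noteq> 1) \<and> sim (mpow (Phi u v lam w) r) mI"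
proof -
  let ?u = "zeta s" and ?v = "zeta t" and ?z = "zeta r"
  have R: "Rep s t ?u ?v" using st by (simp add: Rep_def zeta_n)
  have nzu: "\<And>i. 0 < i \<Longrightarrow> i < s \<Longrightarrow> cc ?u i \<noteq> 0" by (rule cc_zeta)
  have nzv: "\<And>i. 0 < i \<Longrightarrow> i < t \<Longrightarrow> cc ?v i \<noteq> 0" by (rule cc_zeta)
  have "\<exists>lam. mtr (Phi ?u ?v lam w) = ?z + inverse ?z"
  proof (cases "isl (hd w)")
    case True
    thus ?thesis using w by (intro exists_lam[OF nzu nzv]) auto
  next
    case False
    obtain x w1 where xw: "w = x # w1" using w(2) by (cases w) auto
    have w1: "w1 \<noteq> []" using xw w(3) by auto
    have r1: "fp_reduced s t w1" and xl: "fp_letter s t x" and xh: "isl x \<noteq> isl (hd w1)"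
      using w(1) xw w1 by (auto simp: red_Cons)
    have lw1: "last w1 = last w" using xw w1 by simp
    have r2: "fp_reduced s t (w1 @ [x])"
      using r1 xl lw1 w(3) xw unfolding fp_reduced_def by (auto simp: successively_append_iff)
    have "\<exists>lam. mtr (Phi ?u ?v lam (w1 @ [x])) = ?z + inverse ?z"
      using r2 w1 xh False xw by (intro exists_lam[OF nzu nzv]) auto
    moreover have "mtr (Phi ?u ?v lam (w1 @ [x])) = mtr (Phi ?u ?v lam w)" for lam
      by (simp add: xw Phi_append mtr_comm)
    ultimately show ?thesis by simp
  qed
  then obtain lam where tr: "mtr (Phi ?u ?v lam w) = ?z + inverse ?z" by blast
  have "sim (mpow (Phi ?u ?v lam w) r) mI"
  proof -
    have zr: "?z ^ r = -1" using st by (simp add: zeta_n)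
    show ?thesis by (rule CH_root[OF st(3) zeta_nz zeta_sq[OF st(3)] zr mdet_Phi[OF zeta_nz zeta_nz] tr])
  qed
  moreover have "?u ^ 2 \<noteq> 1" using st zeta_sq by auto
  ultimately show ?thesis using R by blast
qed



lemma odd_Inl:
  assumes R: "Rep s t u v" and i: "0 < i" "i < s" and j: "j < s"
    and IH: "sim (mpow (Phi u v lam (if (j + i) mod s = 0 then v' else v' @ [Inl ((j + i) mod s)])) r) mI"
  shows "sim (mpow (Phi u v lam (Inl i # v' @ [Inl j])) r) mI"
proof -
  let ?K = "LA u i" and ?K' = "LA u (s - i)" and ?w2 = "if (j + i) mod s = 0 then v' else v' @ [Inl ((j + i) mod s)]"
  have u0: "u \<noteq> 0" using R by (simp add: Rep_def)
  have KK: "mm ?K ?K' = LA u s" "mm ?K' ?K = LA u s" using i u0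
    by (simp_all add: LA_add[symmetric])
  have Ls: "sim (LA u s) mI" using R unfolding Rep_def by (intro LA_s) auto
  have w2: "sim (Phi u v lam ?w2) (mm (Phi u v lam v') (LA u (j + i)))"
  proof (cases "(j + i) mod s = 0")
    case True
    have "sim (mm (Phi u v lam v') (LA u (j + i))) (mm (Phi u v lam v') (LA u 0))"
      using sim_mmR[OF LA_mod[OF R, of "j+i"]] True by simp
    thus ?thesis using True by (simp add: sim_sym)
  next
    case False
    have "sim (mm (Phi u v lam v') (LA u (j + i))) (mm (Phi u v lam v') (LA u ((j + i) mod s)))"
      using sim_mmR[OF LA_mod[OF R, of "j+i"]] by simp
    thus ?thesis using False by (simp add: sim_sym Phi_append Lt_def)
  qed
  have "sim (mm (mm ?K (Phi u v lam ?w2)) ?K') (mm (mm ?K (mm (Phi u v lam v') (LA u (j + i)))) ?K')"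
    by (rule sim_mmL[OF sim_mmR[OF w2]])
  also have "mm (mm ?K (mm (Phi u v lam v') (LA u (j + i)))) ?K' = mm ?K (mm (Phi u v lam v') (LA u (j + s)))"
  proof -
    have "LA u (j + s) = mm (LA u (j + i)) ?K'"
      using u0 i LA_add[of u "j+i" "s-i"] by simp
    thus ?thesis by (simp add: mm_assoc)
  qed
  also have "sim \<dots> (mm ?K (mm (Phi u v lam v') (LA u j)))"
    using sim_mmR[OF sim_mmR[OF LA_mod[OF R, of "j+s"]]] j by simp
  also have "mm ?K (mm (Phi u v lam v') (LA u j)) = Phi u v lam (Inl i # v' @ [Inl j])"
    by (simp add: Phi_append Lt_def)
  finally have W: "sim (Phi u v lam (Inl i # v' @ [Inl j])) (mm (mm ?K (Phi u v lam ?w2)) ?K')"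
    by (rule sim_sym)
  show ?thesis using conj_final[OF _ _ IH W] KK Ls by simp
qed

lemma odd_Inr:
  assumes R: "Rep s t u v" and i: "0 < i" "i < t" and j: "j < t"
    and IH: "sim (mpow (Phi u v lam (if (j + i) mod t = 0 then v' else v' @ [Inr ((j + i) mod t)])) r) mI"
  shows "sim (mpow (Phi u v lam (Inr i # v' @ [Inr j])) r) mI"
proof -
  let ?K = "LB v lam i" and ?K' = "LB v lam (t - i)" and ?w2 = "if (j + i) mod t = 0 then v' else v' @ [Inr ((j + i) mod t)]"
  have u0: "v \<noteq> 0" using R by (simp add: Rep_def)
  have KK: "mm ?K ?K' = LB v lam t" "mm ?K' ?K = LB v lam t" using i u0
    by (simp_all add: LB_add[symmetric])
  have Ls: "sim (LB v lam t) mI" using R unfolding Rep_def by (intro LB_t) auto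
  have w2: "sim (Phi u v lam ?w2) (mm (Phi u v lam v') (LB v lam (j + i)))"
  proof (cases "(j + i) mod t = 0")
    case True
    have "sim (mm (Phi u v lam v') (LB v lam (j + i))) (mm (Phi u v lam v') (LB v lam 0))"
      using sim_mmR[OF LB_mod[OF R, of lam "j+i"]] True by simp
    thus ?thesis using True by (simp add: sim_sym)
  next
    case False
    have "sim (mm (Phi u v lam v') (LB v lam (j + i))) (mm (Phi u v lam v') (LB v lam ((j + i) mod t)))"
      using sim_mmR[OF LB_mod[OF R, of lam "j+i"]] by simp
    thus ?thesis using False by (simp add: sim_sym Phi_append Lt_def)
  qed
  have "sim (mm (mm ?K (Phi u v lam ?w2)) ?K') (mm (mm ?K (mm (Phi u v lam v') (LB v lam (j + i)))) ?K')"
    by (rule sim_mmL[OF sim_mmR[OF w2]])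
  also have "mm (mm ?K (mm (Phi u v lam v') (LB v lam (j + i)))) ?K' = mm ?K (mm (Phi u v lam v') (LB v lam (j + t)))"
  proof -
    have "LB v lam (j + t) = mm (LB v lam (j + i)) ?K'"
      using u0 i LB_add[of v lam "j+i" "t-i"] by simp
    thus ?thesis by (simp add: mm_assoc)
  qed
  also have "sim \<dots> (mm ?K (mm (Phi u v lam v') (LB v lam j)))"
    using sim_mmR[OF sim_mmR[OF LB_mod[OF R, of lam "j+t"]]] j by simp
  also have "mm ?K (mm (Phi u v lam v') (LB v lam j)) = Phi u v lam (Inr i # v' @ [Inr j])"
    by (simp add: Phi_append Lt_def)
  finally have W: "sim (Phi u v lam (Inr i # v' @ [Inr j])) (mm (mm ?K (Phi u v lam ?w2)) ?K')"
    by (rule sim_sym)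
  show ?thesis using conj_final[OF _ _ IH W] KK Ls by simp
qed



lemma red_snoc: "fp_reduced s t (w @ [y]) \<longleftrightarrow> fp_reduced s t w \<and> fp_letter s t y \<and> (w = [] \<or> isl (last w) \<noteq> isl y)"
  unfolding fp_reduced_def by (auto simp: successively_append_iff)

lemma core:
  assumes st: "s > 1" "t > 1" "r > 1"
  shows "fp_reduced s t w \<Longrightarrow> \<exists>u v lam. Rep s t u v \<and> (u ^ 2 \<noteq> 1 \<or> v ^ 2 \<noteq> 1) \<and> sim (mpow (Phi u v lam w) r) mI"
proof (induction "length w" arbitrary: w rule: less_induct)
  case less
  have shape: "w = [] \<or> (\<exists>x. w = [x]) \<or> (\<exists>x w1 y. w = x # w1 @ [y])"
  proof (cases w)
    case (Cons x w')
    thus ?thesis by (cases w' rule: rev_exhaust) auto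
  qed simp
  show ?case
  proof -
    { assume "w = []"
      hence ?thesis using st
        by (intro exI[of _ "zeta s"] exI[of _ 1] exI[of _ 0]) (simp add: Rep_def zeta_n zeta_sq)
    }
    moreover
    { fix x assume wx: "w = [x]"
      have ?thesis
      proof (cases x)
        case (Inl i)
        have "Phi 1 (zeta t) 0 w = mI" using wx Inl by (simp add: Lt_def LA_def cc_def mI_def)
        thus ?thesis using st
          by (intro exI[of _ 1] exI[of _ "zeta t"] exI[of _ 0]) (simp add: Rep_def zeta_n zeta_sq)
      next
        case (Inr j)
        have "Phi (zeta s) 1 0 w = mI" using wx Inr by (simp add: Lt_def LB_def mI_def)
        thus ?thesis using st
          by (intro exI[of _ "zeta s"] exI[of _ 1] exI[of _ 0]) (simp add: Rep_def zeta_n zeta_sq)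
      qed
    }
    moreover
    { fix x w1 y assume w: "w = x # w1 @ [y]"
      have ?thesis
      proof (cases "isl x = isl y")
        case False
        thus ?thesis using even_case[OF st less.prems] w by simp
      next
        case True
        have r1: "fp_reduced s t (w1 @ [y])" and xl: "fp_letter s t x"
          and xh: "isl x \<noteq> isl (hd (w1 @ [y]))" using less.prems w by (auto simp: red_Cons)
        have rw1: "fp_reduced s t w1" and yl: "fp_letter s t y" and ly: "w1 = [] \<or> isl (last w1) \<noteq> isl y"
          using r1 by (auto simp: red_snoc)
        have w1: "w1 \<noteq> []" using xh True by auto
        show ?thesis
        proof (cases x)
          case (Inl i)
          then obtain j where y: "y = Inl j" using True by (cases y) auto
          have i: "0 < i" "i < s" and j: "0 < j" "j < s" using xl yl Inl y by (auto simp: fp_letter_def)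
          define w2 where "w2 = (if (j + i) mod s = 0 then w1 else w1 @ [Inl ((j + i) mod s)])"
          have "fp_reduced s t w2"
          proof (cases "(j + i) mod s = 0")
            case False
            have "(j + i) mod s < s" using st by simp
            thus ?thesis using False rw1 ly y w1 by (simp add: w2_def red_snoc fp_letter_def)
          qed (simp add: w2_def rw1)
          moreover have "length w2 < length w" using w by (simp add: w2_def)
          ultimately obtain u v lam where R: "Rep s t u v" "u ^ 2 \<noteq> 1 \<or> v ^ 2 \<noteq> 1"
            and P: "sim (mpow (Phi u v lam w2) r) mI" using less.hyps by blast
          have "sim (mpow (Phi u v lam w) r) mI"
            using odd_Inl[OF R(1) i j(2), of lam w1 r] P w Inl y by (simp add: w2_def)
          thus ?thesis using R by blast
        next
          case (Inr i)
          then obtain j where y: "y = Inr j" using True by (cases y) auto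
          have i: "0 < i" "i < t" and j: "0 < j" "j < t" using xl yl Inr y by (auto simp: fp_letter_def)
          define w2 where "w2 = (if (j + i) mod t = 0 then w1 else w1 @ [Inr ((j + i) mod t)])"
          have "fp_reduced s t w2"
          proof (cases "(j + i) mod t = 0")
            case False
            have "(j + i) mod t < t" using st by simp
            thus ?thesis using False rw1 ly y w1 by (simp add: w2_def red_snoc fp_letter_def)
          qed (simp add: w2_def rw1)
          moreover have "length w2 < length w" using w by (simp add: w2_def)
          ultimately obtain u v lam where R: "Rep s t u v" "u ^ 2 \<noteq> 1 \<or> v ^ 2 \<noteq> 1"
            and P: "sim (mpow (Phi u v lam w2) r) mI" using less.hyps by blast
          have "sim (mpow (Phi u v lam w) r) mI"
            using odd_Inr[OF R(1) i j(2), of lam w1 r] P w Inr y by (simp add: w2_def)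
          thus ?thesis using R by blast
        qed
      qed
    }
    ultimately show ?thesis using shape by blast
  qed
qed

theorem mainTheorem18:
  fixes s t r :: nat and w :: "(nat + nat) list"
  assumes "s > 1" and "t > 1" and "r > 1"
    and "w \<in> carrier (free_prod_cyclic s t)"
  shows "normal_closure (free_prod_cyclic s t) {w [^]\<^bsub>free_prod_cyclic s t\<^esub> r}
           \<noteq> carrier (free_prod_cyclic s t)"
proof -
  let ?G = "free_prod_cyclic s t"
  interpret G: group ?G by (rule fp_group)
  have wr: "fp_reduced s t w" using assms(4) by (simp add: free_prod_cyclic_def)
  obtain u v lam where R: "Rep s t u v" and nt: "u ^ 2 \<noteq> 1 \<or> v ^ 2 \<noteq> 1"
    and P: "sim (mpow (Phi u v lam w) r) mI"
    using core[OF assms(1-3) wr] by blast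
  define N where "N = {g \<in> carrier ?G. sim (Phi u v lam g) mI}"
  have mul: "sim (Phi u v lam (a \<otimes>\<^bsub>?G\<^esub> b)) (mm (Phi u v lam a) (Phi u v lam b))" for a b
    using Phi_mult[OF R] by (simp add: free_prod_cyclic_def)
  have one: "\<one>\<^bsub>?G\<^esub> = []" by (simp add: free_prod_cyclic_def)
  have invsim: "sim (mm (Phi u v lam g) (Phi u v lam (inv\<^bsub>?G\<^esub> g))) mI" if "g \<in> carrier ?G" for g
  proof -
    have "g \<otimes>\<^bsub>?G\<^esub> inv\<^bsub>?G\<^esub> g = []" using that one by simp
    thus ?thesis using mul[of g "inv\<^bsub>?G\<^esub> g"] by (metis Phi_simps(1) sim_sym)
  qed
  have sub: "subgroup N ?G"
  proof (rule G.subgroupI)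
    show "N \<subseteq> carrier ?G" by (auto simp: N_def)
    have "[] \<in> N" by (simp add: N_def free_prod_cyclic_def)
    thus "N \<noteq> {}" by blast
  next
    fix a assume a: "a \<in> N"
    hence ac: "a \<in> carrier ?G" and sa: "sim (Phi u v lam a) mI" by (auto simp: N_def)
    have "sim (Phi u v lam (inv\<^bsub>?G\<^esub> a)) (mm (Phi u v lam a) (Phi u v lam (inv\<^bsub>?G\<^esub> a)))"
      using sim_mmL[OF sim_sym[OF sa], where B = "Phi u v lam (inv\<^bsub>?G\<^esub> a)"] by simp
    also have "sim \<dots> mI" by (rule invsim[OF ac])
    finally show "inv\<^bsub>?G\<^esub> a \<in> N" using ac by (simp add: N_def)
  next
    fix a b assume "a \<in> N" "b \<in> N"
    hence ac: "a \<in> carrier ?G" "b \<in> carrier ?G" and sa: "sim (Phi u v lam a) mI" "sim (Phi u v lam b) mI"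
      by (auto simp: N_def)
    have "sim (Phi u v lam (a \<otimes>\<^bsub>?G\<^esub> b)) (mm (Phi u v lam a) (Phi u v lam b))" by (rule mul)
    also have "sim \<dots> (mm mI mI)" by (rule sim_mm[OF sa])
    finally show "a \<otimes>\<^bsub>?G\<^esub> b \<in> N" using ac by (simp add: N_def)
  qed
  have pw: "sim (Phi u v lam (w [^]\<^bsub>?G\<^esub> n)) (mpow (Phi u v lam w) n)" for n
  proof (induction n)
    case 0 thus ?case using one by simp
  next
    case (Suc n)
    have "sim (Phi u v lam (w [^]\<^bsub>?G\<^esub> Suc n)) (mm (Phi u v lam (w [^]\<^bsub>?G\<^esub> n)) (Phi u v lam w))"
      using mul by simp
    also have "sim \<dots> (mpow (Phi u v lam w) (Suc n))" using sim_mmL[OF Suc.IH] by simp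
    finally show ?case .
  qed
  have wN: "sim (Phi u v lam (w [^]\<^bsub>?G\<^esub> r)) mI" using sim_trans[OF pw P] .
  have conj: "g \<otimes>\<^bsub>?G\<^esub> (w [^]\<^bsub>?G\<^esub> r) \<otimes>\<^bsub>?G\<^esub> inv\<^bsub>?G\<^esub> g \<in> N" if g: "g \<in> carrier ?G" for g
  proof -
    let ?x = "w [^]\<^bsub>?G\<^esub> r"
    have xc: "?x \<in> carrier ?G" using assms(4) by simp
    have "sim (Phi u v lam (g \<otimes>\<^bsub>?G\<^esub> ?x \<otimes>\<^bsub>?G\<^esub> inv\<^bsub>?G\<^esub> g))
       (mm (Phi u v lam (g \<otimes>\<^bsub>?G\<^esub> ?x)) (Phi u v lam (inv\<^bsub>?G\<^esub> g)))" by (rule mul)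
    also have "sim \<dots> (mm (mm (Phi u v lam g) (Phi u v lam ?x)) (Phi u v lam (inv\<^bsub>?G\<^esub> g)))"
      by (rule sim_mmL[OF mul])
    also have "sim \<dots> (mm (mm (Phi u v lam g) mI) (Phi u v lam (inv\<^bsub>?G\<^esub> g)))"
      by (rule sim_mmL[OF sim_mmR[OF wN]])
    also have "sim \<dots> mI" using invsim[OF g] by simp
    finally show ?thesis using g xc by (simp add: N_def)
  qed
  have incl: "normal_closure ?G {w [^]\<^bsub>?G\<^esub> r} \<subseteq> N"
    unfolding normal_closure_def
    by (rule G.generate_subgroup_incl[OF _ sub]) (use conj in auto)
  have "\<exists>e \<in> carrier ?G. e \<notin> N"
  proof (cases "u ^ 2 \<noteq> 1")
    case True
    have u0: "u \<noteq> 0" using R by (simp add: Rep_def)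
    have uu: "u \<noteq> inverse u"
    proof
      assume "u = inverse u"
      hence "u * u = u * inverse u" by simp
      also have "\<dots> = 1" using u0 by simp
      finally have "u * u = 1" .
      thus False using True by (simp add: power2_eq_square)
    qed
    hence "cc u 1 = 1" by (simp add: cc_def)
    hence "\<not> sim (Phi u v lam [Inl 1]) mI"
      by (simp add: Lt_def LA_def sim_def mI_def)
    moreover have "[Inl 1] \<in> carrier ?G" using assms(1)
      by (simp add: free_prod_cyclic_def fp_reduced_def fp_letter_def)
    ultimately show ?thesis by (intro bexI[of _ "[Inl 1]"]) (auto simp: N_def)
  next
    case False
    hence vv: "v ^ 2 \<noteq> 1" using nt by simp
    have "\<not> sim (Phi u v lam [Inr 1]) mI"
    proof
      assume "sim (Phi u v lam [Inr 1]) mI"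
      hence "v = 1 \<or> v = -1" by (auto simp: Lt_def LB_def sim_def mI_def)
      thus False using vv by auto
    qed
    moreover have "[Inr 1] \<in> carrier ?G" using assms(2)
      by (simp add: free_prod_cyclic_def fp_reduced_def fp_letter_def)
    ultimately show ?thesis by (intro bexI[of _ "[Inr 1]"]) (auto simp: N_def)
  qed
  thus ?thesis using incl by blast
qed


end
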